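(* Let $\mathbb{K}$ be a field, $R=\mathbb{K}[X_1,\ldots,X_n]$, and $J \subsetneq I \subset R$ monomial ideals. Fix a variable $X_i$ and let $I^1, J^1 \subset R[Y]$ be the $1$-step polarizations of $I$ and $J$ with respect to $X_i$. Then \[ \operatorname{sdepth} I/J = \operatorname{sdepth} I^1/J^1 - 1. \]
   Context: $1$-step polarization: if $u_1,\dots,u_m$ are the minimal monomial generators of a monomial ideal $I\subset R$, its $1$-step polarization with respect to $X_i$ is the ideal $I^1\subset R[Y]$ ($Y$ a new variable) generated by $v_1,\dots,v_m$, where $v_j=\frac{Y}{X_i}u_j$ if $X_i^2\mid u_j$, and $v_j=u_j$ otherwise. Stanley depth: with the fine multigrading, a Stanley decomposition of a finitely generated multigraded module $M$ is a finite family $(\mathbb{K}[Z_k], m_k)$ with $m_k$ homogeneous, $Z_k$ subsets of the variables, $m_k\mathbb{K}[Z_k]$ free over $\mathbb{K}[Z_k]$, and $M=\bigoplus_k m_k\mathbb{K}[Z_k]$ as multigraded $\mathbb{K}$-vector spaces; its depth is $\min_k|Z_k|$, and $\operatorname{sdepth}M$ is the maximal depth of a Stanley decomposition. *)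

theory Defs
  imports Main
begin

text \<open>Monomials of K[X_0,...,X_{n-1}] are represented by exponent vectors
  a :: nat => nat with a j = 0 for j >= n.  In the ring R[Y] with n variables
  X_0..X_{n-1}, the new variable Y is X_n.\<close>

type_synonym mon = "nat \<Rightarrow> nat"

definition monoms :: "nat \<Rightarrow> mon set" where
  "monoms n = {a. \<forall>j\<ge>n. a j = 0}"

definition mdvd :: "mon \<Rightarrow> mon \<Rightarrow> bool" where
  "mdvd a b \<longleftrightarrow> (\<forall>j. a j \<le> b j)"

definition mmult :: "mon \<Rightarrow> mon \<Rightarrow> mon" where
  "mmult a b = (\<lambda>j. a j + b j)"

text \<open>A monomial ideal of K[X_0..X_{n-1}] is identified with the set of monomials
  it contains (which is a K-basis of it): an upward closed set of monomials.\<close>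
definition monomial_ideal :: "nat \<Rightarrow> mon set \<Rightarrow> bool" where
  "monomial_ideal n I \<longleftrightarrow> I \<subseteq> monoms n \<and>
     (\<forall>a\<in>I. \<forall>b\<in>monoms n. mdvd a b \<longrightarrow> b \<in> I)"

definition mingens :: "mon set \<Rightarrow> mon set" where
  "mingens I = {a\<in>I. \<forall>b\<in>I. mdvd b a \<longrightarrow> b = a}"

definition ideal_gen :: "nat \<Rightarrow> mon set \<Rightarrow> mon set" where
  "ideal_gen n G = {b\<in>monoms n. \<exists>a\<in>G. mdvd a b}"

definition pol1_mon :: "nat \<Rightarrow> nat \<Rightarrow> mon \<Rightarrow> mon" where
  "pol1_mon n i u = (if 2 \<le> u i then u(i := u i - 1, n := u n + 1) else u)"

definition polarization1 :: "nat \<Rightarrow> nat \<Rightarrow> mon set \<Rightarrow> mon set" where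
  "polarization1 n i I = ideal_gen (Suc n) (pol1_mon n i ` mingens I)"

text \<open>The multigraded
  K-vector space I/J has the monomials in I - J as homogeneous basis, each graded
  piece being at most one-dimensional.  A pair (m, Z) stands for the summand
  m K[Z]: m is a (nonzero) homogeneous element, i.e. (up to a scalar) a monomial
  of I - J; m K[Z] is a free K[Z]-submodule of I/J iff m u \<notin> J for all monomials u
  in the variables Z; and I/J is the direct sum of the m K[Z] as multigraded
  K-vector spaces iff every monomial of I - J lies in exactly one of them.\<close>
definition stanley_decomp :: "nat \<Rightarrow> mon set \<Rightarrow> mon set \<Rightarrow> (mon \<times> nat set) set \<Rightarrow> bool" where
  "stanley_decomp n I J D \<longleftrightarrow> finite D \<and>
     (\<forall>(m, Z)\<in>D. Z \<subseteq> {..<n} \<and> m \<in> monoms n \<and>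
        (\<forall>u. (\<forall>j. j \<notin> Z \<longrightarrow> u j = 0) \<longrightarrow> mmult m u \<in> I - J)) \<and>
     (\<forall>c\<in>I - J. \<exists>!p. p \<in> D \<and>
        (\<exists>u. (\<forall>j. j \<notin> snd p \<longrightarrow> u j = 0) \<and> c = mmult (fst p) u))"

definition sdecomp_depth :: "(mon \<times> nat set) set \<Rightarrow> nat" where
  "sdecomp_depth D = Min ((\<lambda>p. card (snd p)) ` D)"

definition sdepth :: "nat \<Rightarrow> mon set \<Rightarrow> mon set \<Rightarrow> nat" where
  "sdepth n I J = Max {d. \<exists>D. stanley_decomp n I J D \<and> d = sdecomp_depth D}"

end

theory Submission
  imports Defs "HOL.Topological_Spaces"
begin

definition cone :: "mon \<Rightarrow> nat set \<Rightarrow> mon set" where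
  "cone m Z = {c. \<forall>j. m j \<le> c j \<and> (j \<notin> Z \<longrightarrow> c j = m j)}"

lemma cone_ex: "(\<exists>u. (\<forall>j. j \<notin> Z \<longrightarrow> u j = 0) \<and> c = mmult m u) \<longleftrightarrow> c \<in> cone m Z"
proof
  assume "\<exists>u. (\<forall>j. j \<notin> Z \<longrightarrow> u j = 0) \<and> c = mmult m u"
  then show "c \<in> cone m Z" by (auto simp: cone_def mmult_def)
next
  assume c: "c \<in> cone m Z"
  show "\<exists>u. (\<forall>j. j \<notin> Z \<longrightarrow> u j = 0) \<and> c = mmult m u"
    using c by (intro exI[of _ "\<lambda>j. c j - m j"]) (auto simp: cone_def mmult_def fun_eq_iff)
qed

lemma cone_sub: "(\<forall>u. (\<forall>j. j \<notin> Z \<longrightarrow> u j = 0) \<longrightarrow> mmult m u \<in> X) \<longleftrightarrow> cone m Z \<subseteq> X"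
proof
  assume a: "\<forall>u. (\<forall>j. j \<notin> Z \<longrightarrow> u j = 0) \<longrightarrow> mmult m u \<in> X"
  show "cone m Z \<subseteq> X"
  proof
    fix c assume "c \<in> cone m Z"
    then obtain u :: mon where "\<forall>j. j \<notin> Z \<longrightarrow> u j = 0" "c = mmult m u" using cone_ex[of Z c m] by blast
    then show "c \<in> X" using a by simp
  qed
next
  assume a: "cone m Z \<subseteq> X"
  show "\<forall>u. (\<forall>j. j \<notin> Z \<longrightarrow> u j = 0) \<longrightarrow> mmult m u \<in> X"
  proof (intro allI impI)
    fix u :: mon assume "\<forall>j. j \<notin> Z \<longrightarrow> u j = 0"
    then have "mmult m u \<in> cone m Z" using cone_ex[of Z "mmult m u" m] by blast
    then show "mmult m u \<in> X" using a by blast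
  qed
qed

lemma sd_iff: "stanley_decomp n I J D \<longleftrightarrow> finite D \<and>
   (\<forall>(m,Z)\<in>D. Z \<subseteq> {..<n} \<and> m \<in> monoms n \<and> cone m Z \<subseteq> I - J) \<and>
   (\<forall>c\<in>I - J. \<exists>!p. p \<in> D \<and> c \<in> cone (fst p) (snd p))"
  unfolding stanley_decomp_def cone_sub cone_ex by simp

lemma cone_monoms: "m \<in> monoms n \<Longrightarrow> Z \<subseteq> {..<n} \<Longrightarrow> cone m Z \<subseteq> monoms n"
  unfolding cone_def monoms_def by (auto, metis lessThan_iff not_le subsetD)

definition tau :: "nat \<Rightarrow> nat \<Rightarrow> mon \<Rightarrow> mon" where
  "tau n i c = (c(n := 0))(i := (if c i = 0 then 0 else if c n = 0 then 1 else Suc (c i)))"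

lemma tau_monoms: "i < n \<Longrightarrow> c \<in> monoms (Suc n) \<Longrightarrow> tau n i c \<in> monoms n"
  by (auto simp: tau_def monoms_def)

lemma pol_monoms: "i < n \<Longrightarrow> a \<in> monoms n \<Longrightarrow> pol1_mon n i a \<in> monoms (Suc n)"
  by (auto simp: pol1_mon_def monoms_def)

lemma tau_pol: "i < n \<Longrightarrow> a \<in> monoms n \<Longrightarrow> tau n i (pol1_mon n i a) = a"
  by (auto simp: tau_def pol1_mon_def monoms_def fun_eq_iff)

lemma mi_sub: "monomial_ideal n I \<Longrightarrow> I \<subseteq> monoms n"
  by (simp add: monomial_ideal_def)

lemma mi_up: "monomial_ideal n I \<Longrightarrow> a \<in> I \<Longrightarrow> b \<in> monoms n \<Longrightarrow> mdvd a b \<Longrightarrow> b \<in> I"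
  by (auto simp: monomial_ideal_def)

lemma mingens_below:
  assumes mi: "monomial_ideal n I" and a: "a \<in> I"
  shows "\<exists>u\<in>mingens I. mdvd u a"
proof -
  let ?P = "\<lambda>u. u \<in> I \<and> mdvd u a"
  have "?P a" using a by (simp add: mdvd_def)
  from ex_has_least_nat[of ?P a "\<lambda>u. \<Sum>j<n. u j", OF this]
  obtain u where u: "?P u" and min: "\<And>y. ?P y \<Longrightarrow> (\<Sum>j<n. u j) \<le> (\<Sum>j<n. y j)" by blast
  have "u \<in> mingens I"
    unfolding mingens_def
  proof (intro CollectI conjI ballI impI)
    show "u \<in> I" using u by simp
    fix b assume b: "b \<in> I" "mdvd b u"
    have Pb: "?P b" using b u by (auto simp: mdvd_def intro: order_trans)
    have le: "\<forall>j\<in>{..<n}. b j \<le> u j" using b by (auto simp: mdvd_def)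
    have "\<forall>j\<in>{..<n}. b j = u j"
    proof (rule ccontr)
      assume "\<not> (\<forall>j\<in>{..<n}. b j = u j)"
      then obtain k where k: "k \<in> {..<n}" "b k < u k" using le by (metis order_le_neq_trans)
      have "(\<Sum>j<n. b j) < (\<Sum>j<n. u j)"
        using sum_strict_mono_ex1[of "{..<n}" b u] le k by auto
      with min[OF Pb] show False by simp
    qed
    moreover have "b \<in> monoms n" "u \<in> monoms n" using b u mi_sub[OF mi] by auto
    ultimately show "b = u" by (auto simp: monoms_def fun_eq_iff) (metis lessThan_iff not_le)
  qed
  then show ?thesis using u by blast
qed

lemma pol_sub: "polarization1 n i I \<subseteq> monoms (Suc n)"
  by (auto simp: polarization1_def ideal_gen_def)

lemma pol_i: "i \<noteq> n \<Longrightarrow> pol1_mon n i u i = (if 2 \<le> u i then u i - 1 else u i)"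
  by (simp add: pol1_mon_def)
lemma pol_n: "i \<noteq> n \<Longrightarrow> pol1_mon n i u n = (if 2 \<le> u i then Suc (u n) else u n)"
  by (simp add: pol1_mon_def)
lemma pol_o: "j \<noteq> i \<Longrightarrow> j \<noteq> n \<Longrightarrow> pol1_mon n i u j = u j"
  by (simp add: pol1_mon_def)
lemma tau_i: "tau n i c i = (if c i = 0 then 0 else if c n = 0 then 1 else Suc (c i))"
  by (simp add: tau_def)
lemma tau_n: "i \<noteq> n \<Longrightarrow> tau n i c n = 0"
  by (simp add: tau_def)
lemma tau_o: "j \<noteq> i \<Longrightarrow> j \<noteq> n \<Longrightarrow> tau n i c j = c j"
  by (simp add: tau_def)

lemma mem_pol:
  assumes mi: "monomial_ideal n I" and i: "i < n" and c: "c \<in> monoms (Suc n)"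
  shows "c \<in> polarization1 n i I \<longleftrightarrow> tau n i c \<in> I"
proof
  have ne: "i \<noteq> n" using i by simp
  assume "c \<in> polarization1 n i I"
  then obtain u where u: "u \<in> mingens I" "mdvd (pol1_mon n i u) c"
    by (auto simp: polarization1_def ideal_gen_def)
  have uI: "u \<in> I" using u by (simp add: mingens_def)
  then have un: "u n = 0" using mi_sub[OF mi] by (auto simp: monoms_def)
  have cj: "pol1_mon n i u j \<le> c j" for j using u(2) by (simp add: mdvd_def)
  have "mdvd u (tau n i c)"
    unfolding mdvd_def
  proof
    fix j
    show "u j \<le> tau n i c j"
    proof (cases "j = i")
      case True
      show ?thesis
      proof (cases "2 \<le> u i")
        case True
        then have "u i - 1 \<le> c i" "1 \<le> c n" using cj[of i] cj[of n] ne un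
          by (simp_all add: pol_i pol_n)
        then show ?thesis using \<open>j = i\<close> True by (simp add: tau_i; linarith)
      next
        case False
        then have "u i \<le> c i" using cj[of i] ne by (simp add: pol_i)
        then show ?thesis using \<open>j = i\<close> False by (simp add: tau_i)
      qed
    next
      case False
      show ?thesis
      proof (cases "j = n")
        case True
        then show ?thesis using un ne by (simp add: tau_n)
      next
        case False
        then show ?thesis using cj[of j] \<open>j \<noteq> i\<close> by (simp add: tau_o pol_o)
      qed
    qed
  qed
  then show "tau n i c \<in> I" using mi_up[OF mi uI tau_monoms[OF i c]] by simp
next
  have ne: "i \<noteq> n" using i by simp
  assume "tau n i c \<in> I"
  then obtain u where u: "u \<in> mingens I" "mdvd u (tau n i c)" using mingens_below[OF mi] by blast
  have uI: "u \<in> I" using u by (simp add: mingens_def)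
  then have un: "u n = 0" using mi_sub[OF mi] by (auto simp: monoms_def)
  have tj: "u j \<le> tau n i c j" for j using u(2) by (simp add: mdvd_def)
  have "mdvd (pol1_mon n i u) c"
    unfolding mdvd_def
  proof
    fix j
    show "pol1_mon n i u j \<le> c j"
    proof (cases "j = i")
      case True
      show ?thesis
      proof (cases "2 \<le> u i")
        case True
        then have "2 \<le> tau n i c i" using tj[of i] by simp
        then have "c i \<noteq> 0" "c n \<noteq> 0" "Suc (c i) \<ge> u i" using tj[of i]
          by (auto simp: tau_i split: if_splits)
        then show ?thesis using True \<open>j = i\<close> ne by (simp add: pol_i)
      next
        case False
        have "u i \<le> c i" using tj[of i] False by (auto simp: tau_i split: if_splits)
        then show ?thesis using False \<open>j = i\<close> ne by (simp add: pol_i)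
      qed
    next
      case False
      show ?thesis
      proof (cases "j = n")
        case True
        have "2 \<le> u i \<Longrightarrow> c n \<noteq> 0" using tj[of i] by (auto simp: tau_i split: if_splits)
        then show ?thesis using True un ne by (auto simp: pol_n)
      next
        case False
        then show ?thesis using tj[of j] \<open>j \<noteq> i\<close> by (simp add: tau_o pol_o)
      qed
    qed
  qed
  then show "c \<in> polarization1 n i I" using u c
    by (auto simp: polarization1_def ideal_gen_def)
qed


lemma all_split3: "(\<forall>j. P j) \<longleftrightarrow> P i \<and> P n \<and> (\<forall>j. j \<noteq> i \<longrightarrow> j \<noteq> n \<longrightarrow> P j)"
proof
  assume "\<forall>j. P j" then show "P i \<and> P n \<and> (\<forall>j. j \<noteq> i \<longrightarrow> j \<noteq> n \<longrightarrow> P j)" by blast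
next
  assume a: "P i \<and> P n \<and> (\<forall>j. j \<noteq> i \<longrightarrow> j \<noteq> n \<longrightarrow> P j)"
  show "\<forall>j. P j"
  proof
    fix j show "P j" using a by (cases "j = i"; cases "j = n") auto
  qed
qed

definition phi :: "nat \<Rightarrow> nat \<Rightarrow> mon \<times> nat set \<Rightarrow> mon \<times> nat set" where
  "phi n i p = (pol1_mon n i (fst p),
     if i \<notin> snd p \<and> fst p i = 1 then insert i (snd p) else insert n (snd p))"

lemma fst_phi: "fst (phi n i (m, Z)) = pol1_mon n i m"
  by (simp add: phi_def)

lemma cone_phi:
  assumes i: "i < n" and m: "m \<in> monoms n" and Z: "Z \<subseteq> {..<n}" and c: "c \<in> monoms (Suc n)"
  shows "c \<in> cone (fst (phi n i (m, Z))) (snd (phi n i (m, Z))) \<longleftrightarrow> tau n i c \<in> cone m Z"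
proof -
  have ne: "i \<noteq> n" using i by simp
  have mn: "m n = 0" using m by (simp add: monoms_def)
  have nZ: "n \<notin> Z" using Z by auto
  have iZ: "i \<in> {..<n}" using i by simp
  let ?Z' = "snd (phi n i (m, Z))"
  have other: "(\<forall>j. j \<noteq> i \<longrightarrow> j \<noteq> n \<longrightarrow> (pol1_mon n i m j \<le> c j \<and> (j \<notin> ?Z' \<longrightarrow> c j = pol1_mon n i m j)))
     \<longleftrightarrow> (\<forall>j. j \<noteq> i \<longrightarrow> j \<noteq> n \<longrightarrow> (m j \<le> tau n i c j \<and> (j \<notin> Z \<longrightarrow> tau n i c j = m j)))"
    by (auto simp: phi_def pol_o tau_o)
  have two: "(pol1_mon n i m i \<le> c i \<and> (i \<notin> ?Z' \<longrightarrow> c i = pol1_mon n i m i)) \<and>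
             (pol1_mon n i m n \<le> c n \<and> (n \<notin> ?Z' \<longrightarrow> c n = pol1_mon n i m n))
     \<longleftrightarrow> (m i \<le> tau n i c i \<and> (i \<notin> Z \<longrightarrow> tau n i c i = m i)) \<and>
         (m n \<le> tau n i c n \<and> (n \<notin> Z \<longrightarrow> tau n i c n = m n))"
    using ne mn nZ by (simp add: phi_def pol_i pol_n tau_i tau_n; cases "i \<in> Z"; simp; arith)
  show ?thesis
    unfolding cone_def mem_Collect_eq fst_phi
    apply (subst all_split3[where i=i and n=n])
    apply (subst (2) all_split3[where i=i and n=n])
    using other two by blast
qed


lemma sd_nonempty: "stanley_decomp n I J D \<Longrightarrow> I - J \<noteq> {} \<Longrightarrow> D \<noteq> {}"
  unfolding sd_iff by blast

lemma depth_le: "finite D \<Longrightarrow> p \<in> D \<Longrightarrow> sdecomp_depth D \<le> card (snd p)"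
  unfolding sdecomp_depth_def by (rule Min_le) auto

lemma depth_attained: "finite D \<Longrightarrow> D \<noteq> {} \<Longrightarrow> \<exists>p\<in>D. sdecomp_depth D = card (snd p)"
proof -
  assume "finite D" "D \<noteq> {}"
  then have "Min ((\<lambda>p. card (snd p)) ` D) \<in> (\<lambda>p. card (snd p)) ` D" by (intro Min_in) auto
  then show ?thesis unfolding sdecomp_depth_def by blast
qed

lemma memdiff:
  assumes "monomial_ideal n I" "monomial_ideal n J" "i < n"
  shows "c \<in> polarization1 n i I - polarization1 n i J \<longleftrightarrow>
         c \<in> monoms (Suc n) \<and> tau n i c \<in> I - J"
  using mem_pol[OF assms(1,3)] mem_pol[OF assms(2,3)] pol_sub[of n i I] by blast

lemma dirA:
  assumes I: "monomial_ideal n I" and J: "monomial_ideal n J" and i: "i < n"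
    and sd: "stanley_decomp n I J D" and ne: "I - J \<noteq> {}"
  shows "stanley_decomp (Suc n) (polarization1 n i I) (polarization1 n i J) (phi n i ` D) \<and>
         Suc (sdecomp_depth D) \<le> sdecomp_depth (phi n i ` D)"
proof -
  note md = memdiff[OF I J i]
  have fin: "finite D" and
    el: "\<And>m Z. (m, Z) \<in> D \<Longrightarrow> Z \<subseteq> {..<n} \<and> m \<in> monoms n \<and> cone m Z \<subseteq> I - J" and
    un: "\<And>c. c \<in> I - J \<Longrightarrow> \<exists>!p. p \<in> D \<and> c \<in> cone (fst p) (snd p)"
    using sd unfolding sd_iff by auto
  have el': "snd (phi n i (m, Z)) \<subseteq> {..<Suc n} \<and> fst (phi n i (m, Z)) \<in> monoms (Suc n) \<and>
      cone (fst (phi n i (m, Z))) (snd (phi n i (m, Z))) \<subseteq> polarization1 n i I - polarization1 n i J"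
    if mZ: "(m, Z) \<in> D" for m Z
  proof (intro conjI)
    have Z: "Z \<subseteq> {..<n}" and m: "m \<in> monoms n" and cs: "cone m Z \<subseteq> I - J" using el[OF mZ] by auto
    show Z': "snd (phi n i (m, Z)) \<subseteq> {..<Suc n}" using Z i by (auto simp: phi_def)
    show m': "fst (phi n i (m, Z)) \<in> monoms (Suc n)" using pol_monoms[OF i m] by (simp add: phi_def)
    show "cone (fst (phi n i (m, Z))) (snd (phi n i (m, Z))) \<subseteq> polarization1 n i I - polarization1 n i J"
    proof
      fix c assume c: "c \<in> cone (fst (phi n i (m, Z))) (snd (phi n i (m, Z)))"
      have cm: "c \<in> monoms (Suc n)" using cone_monoms[OF m' Z'] c by blast
      have "tau n i c \<in> cone m Z" using cone_phi[OF i m Z cm] c by simp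
      then show "c \<in> polarization1 n i I - polarization1 n i J" using cs cm md by blast
    qed
  qed
  have sd': "stanley_decomp (Suc n) (polarization1 n i I) (polarization1 n i J) (phi n i ` D)"
    unfolding sd_iff
  proof (intro conjI ballI)
    show "finite (phi n i ` D)" using fin by simp
  next
    fix q assume "q \<in> phi n i ` D"
    then obtain m Z where mZ: "(m, Z) \<in> D" and q: "q = phi n i (m, Z)" by auto
    show "case q of (m', Z') \<Rightarrow> Z' \<subseteq> {..<Suc n} \<and> m' \<in> monoms (Suc n) \<and>
        cone m' Z' \<subseteq> polarization1 n i I - polarization1 n i J"
      using el'[OF mZ] q by (cases q) auto
  next
    fix c assume c: "c \<in> polarization1 n i I - polarization1 n i J"
    then have cm: "c \<in> monoms (Suc n)" and tc: "tau n i c \<in> I - J" using md by auto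
    from un[OF tc] obtain p where p: "p \<in> D" "tau n i c \<in> cone (fst p) (snd p)"
      and puniq: "\<And>p'. p' \<in> D \<Longrightarrow> tau n i c \<in> cone (fst p') (snd p') \<Longrightarrow> p' = p" by blast
    have cphi: "c \<in> cone (fst (phi n i p')) (snd (phi n i p')) \<longleftrightarrow> tau n i c \<in> cone (fst p') (snd p')"
      if "p' \<in> D" for p'
    proof -
      obtain m Z where pe: "p' = (m, Z)" by (cases p')
      have "Z \<subseteq> {..<n}" "m \<in> monoms n" using el that pe by auto
      then show ?thesis using cone_phi[OF i _ _ cm] pe by simp
    qed
    show "\<exists>!q. q \<in> phi n i ` D \<and> c \<in> cone (fst q) (snd q)"
    proof
      show "phi n i p \<in> phi n i ` D \<and> c \<in> cone (fst (phi n i p)) (snd (phi n i p))"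
        using p cphi by auto
    next
      fix q assume "q \<in> phi n i ` D \<and> c \<in> cone (fst q) (snd q)"
      then obtain p' where "p' \<in> D" "q = phi n i p'" "c \<in> cone (fst q) (snd q)" by auto
      then show "q = phi n i p" using cphi puniq by auto
    qed
  qed
  have Dne: "D \<noteq> {}" using sd_nonempty[OF sd ne] .
  have "\<exists>q\<in>phi n i ` D. sdecomp_depth (phi n i ` D) = card (snd q)"
    using depth_attained[of "phi n i ` D"] fin Dne by simp
  then obtain q where q: "q \<in> phi n i ` D" "sdecomp_depth (phi n i ` D) = card (snd q)" by blast
  then obtain m Z where mZ: "(m, Z) \<in> D" and qe: "q = phi n i (m, Z)" by auto
  have Z: "Z \<subseteq> {..<n}" using el[OF mZ] by auto
  then have fZ: "finite Z" by (rule finite_subset) simp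
  have nZ: "n \<notin> Z" using Z by auto
  have "card (snd q) = Suc (card Z)"
    using nZ fZ i by (auto simp: qe phi_def)
  moreover have "sdecomp_depth D \<le> card Z" using depth_le[OF fin mZ] by simp
  ultimately show ?thesis using sd' q by simp
qed


definition s1 :: "nat \<Rightarrow> nat" where "s1 t = (if t \<le> 1 then t else t - 1)"
definition s2 :: "nat \<Rightarrow> nat" where "s2 t = (if t \<le> 1 then 0 else 1)"

definition TT :: "nat \<Rightarrow> nat \<Rightarrow> mon \<Rightarrow> nat set \<Rightarrow> nat set" where
  "TT n i m Z = {t. m i \<le> s1 t \<and> (i \<notin> Z \<longrightarrow> s1 t = m i) \<and> m n \<le> s2 t \<and> (n \<notin> Z \<longrightarrow> s2 t = m n)}"

definition pieces :: "nat \<Rightarrow> nat \<Rightarrow> mon \<times> nat set \<Rightarrow> (mon \<times> nat set) set" where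
  "pieces n i p = (if finite (TT n i (fst p) (snd p))
     then (\<lambda>t. ((fst p)(i := t, n := 0), snd p - {n, i})) ` TT n i (fst p) (snd p)
     else {((fst p)(i := (LEAST t. t \<in> TT n i (fst p) (snd p)), n := 0), insert i (snd p - {n}))})"

lemma s1_mono: "t \<le> t' \<Longrightarrow> s1 t \<le> s1 t'"
  by (auto simp: s1_def)

lemma TT_up:
  assumes inf: "infinite (TT n i m Z)" and t: "t \<in> TT n i m Z" and le: "t \<le> t'"
  shows "t' \<in> TT n i m Z"
proof -
  have iZ: "i \<in> Z"
  proof (rule ccontr)
    assume "i \<notin> Z"
    then have "TT n i m Z \<subseteq> {0, 1, Suc (m i)}" by (auto simp: TT_def s1_def split: if_splits)
    then show False using inf finite_subset by blast
  qed
  obtain t2 where t2: "t2 \<in> TT n i m Z" "2 \<le> t2"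
  proof -
    have "\<not> TT n i m Z \<subseteq> {..1}" using inf finite_subset by (metis finite_atMost)
    then obtain t where "t \<in> TT n i m Z" "\<not> t \<le> 1" by auto
    then show ?thesis using that[of t] by simp
  qed
  then have mn: "m n \<le> 1" "n \<notin> Z \<longrightarrow> m n = 1" by (auto simp: TT_def s2_def)
  show ?thesis
  proof (cases "t' \<le> 1")
    case True
    then have "t \<le> 1" using le by simp
    then show ?thesis using t le True iZ by (auto simp: TT_def s1_def s2_def)
  next
    case False
    have "m i \<le> s1 t" using t by (simp add: TT_def)
    also have "\<dots> \<le> s1 t'" using s1_mono[OF le] .
    finally show ?thesis using False iZ mn by (auto simp: TT_def s2_def)
  qed
qed

lemma TT_inf_iff:
  assumes inf: "infinite (TT n i m Z)"
  shows "t \<in> TT n i m Z \<longleftrightarrow> (LEAST t. t \<in> TT n i m Z) \<le> t"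
proof -
  have ne: "TT n i m Z \<noteq> {}" using inf by auto
  then obtain t0 where "t0 \<in> TT n i m Z" by auto
  then have L: "(LEAST t. t \<in> TT n i m Z) \<in> TT n i m Z" by (rule LeastI)
  show ?thesis
  proof
    assume "t \<in> TT n i m Z" then show "(LEAST t. t \<in> TT n i m Z) \<le> t" by (rule Least_le)
  next
    assume "(LEAST t. t \<in> TT n i m Z) \<le> t" then show "t \<in> TT n i m Z" using TT_up[OF inf L] by blast
  qed
qed

lemma TT_both:
  assumes "i \<in> Z" "n \<in> Z" "t0 \<in> TT n i m Z"
  shows "infinite (TT n i m Z)"
proof -
  have mn: "m n \<le> 1" using assms(3) by (auto simp: TT_def s2_def split: if_splits)
  have ub: "\<exists>t\<in>TT n i m Z. k \<le> t" for k
    by (rule bexI[of _ "k + m i + 2"]) (use assms mn in \<open>auto simp: TT_def s1_def s2_def\<close>)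
  show ?thesis
  proof
    assume fin: "finite (TT n i m Z)"
    obtain t where t: "t \<in> TT n i m Z" "Suc (Max (TT n i m Z)) \<le> t" using ub by blast
    have "t \<le> Max (TT n i m Z)" using Max_ge[OF fin t(1)] .
    then show False using t(2) by simp
  qed
qed

lemma pol_cone:
  assumes i: "i < n" and a: "a \<in> monoms n"
  shows "pol1_mon n i a \<in> cone m Z \<longleftrightarrow>
    (\<forall>j. j \<noteq> i \<longrightarrow> j \<noteq> n \<longrightarrow> m j \<le> a j \<and> (j \<notin> Z \<longrightarrow> a j = m j)) \<and> a i \<in> TT n i m Z"
proof -
  have ne: "i \<noteq> n" using i by simp
  have an: "a n = 0" using a by (simp add: monoms_def)
  have pi: "pol1_mon n i a i = s1 (a i)" and pn: "pol1_mon n i a n = s2 (a i)"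
    using ne an by (auto simp: pol_i pol_n s1_def s2_def)
  show ?thesis
    unfolding cone_def mem_Collect_eq
    apply (subst all_split3[where i=i and n=n])
    using pi pn by (auto simp: pol_o TT_def)
qed

lemma piece_cone1:
  assumes i: "i < n" and a: "a \<in> monoms n"
  shows "a \<in> cone (m(i := t, n := 0)) (Z - {n, i}) \<longleftrightarrow>
    (\<forall>j. j \<noteq> i \<longrightarrow> j \<noteq> n \<longrightarrow> m j \<le> a j \<and> (j \<notin> Z \<longrightarrow> a j = m j)) \<and> a i = t"
proof -
  have ne: "i \<noteq> n" using i by simp
  have an: "a n = 0" using a by (simp add: monoms_def)
  show ?thesis
    unfolding cone_def mem_Collect_eq
    apply (subst all_split3[where i=i and n=n])
    using ne an by auto
qed

lemma piece_cone2:
  assumes i: "i < n" and a: "a \<in> monoms n"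
  shows "a \<in> cone (m(i := r, n := 0)) (insert i (Z - {n})) \<longleftrightarrow>
    (\<forall>j. j \<noteq> i \<longrightarrow> j \<noteq> n \<longrightarrow> m j \<le> a j \<and> (j \<notin> Z \<longrightarrow> a j = m j)) \<and> r \<le> a i"
proof -
  have ne: "i \<noteq> n" using i by simp
  have an: "a n = 0" using a by (simp add: monoms_def)
  show ?thesis
    unfolding cone_def mem_Collect_eq
    apply (subst all_split3[where i=i and n=n])
    using ne an by auto
qed

lemma pieces_cover:
  assumes i: "i < n" and a: "a \<in> monoms n"
  shows "(\<exists>q\<in>pieces n i p. a \<in> cone (fst q) (snd q)) \<longleftrightarrow> pol1_mon n i a \<in> cone (fst p) (snd p)"
proof -
  obtain m Z where p: "p = (m, Z)" by (cases p)
  define Oth where "Oth = (\<forall>j. j \<noteq> i \<longrightarrow> j \<noteq> n \<longrightarrow> m j \<le> a j \<and> (j \<notin> Z \<longrightarrow> a j = m j))"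
  have pc: "pol1_mon n i a \<in> cone m Z \<longleftrightarrow> Oth \<and> a i \<in> TT n i m Z"
    unfolding Oth_def by (rule pol_cone[OF i a])
  show ?thesis
  proof (cases "finite (TT n i m Z)")
    case True
    have pe: "pieces n i p = (\<lambda>t. (m(i := t, n := 0), Z - {n, i})) ` TT n i m Z"
      using True p by (simp add: pieces_def)
    have "(\<exists>q\<in>pieces n i p. a \<in> cone (fst q) (snd q)) \<longleftrightarrow>
          (\<exists>t\<in>TT n i m Z. a \<in> cone (m(i := t, n := 0)) (Z - {n, i}))"
      unfolding pe by simp
    also have "\<dots> \<longleftrightarrow> (\<exists>t\<in>TT n i m Z. Oth \<and> a i = t)"
      unfolding Oth_def piece_cone1[OF i a] ..
    also have "\<dots> \<longleftrightarrow> Oth \<and> a i \<in> TT n i m Z" by blast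
    finally show ?thesis using pc p by simp
  next
    case False
    have pe: "pieces n i p = {(m(i := (LEAST t. t \<in> TT n i m Z), n := 0), insert i (Z - {n}))}"
      using False p by (simp add: pieces_def)
    have "(\<exists>q\<in>pieces n i p. a \<in> cone (fst q) (snd q)) \<longleftrightarrow>
          a \<in> cone (m(i := (LEAST t. t \<in> TT n i m Z), n := 0)) (insert i (Z - {n}))"
      unfolding pe by simp
    also have "\<dots> \<longleftrightarrow> Oth \<and> (LEAST t. t \<in> TT n i m Z) \<le> a i"
      unfolding Oth_def piece_cone2[OF i a] ..
    also have "\<dots> \<longleftrightarrow> Oth \<and> a i \<in> TT n i m Z" using TT_inf_iff[OF False, of "a i"] by blast
    finally show ?thesis using pc p by simp
  qed
qed

lemma pieces_uniq:
  assumes i: "i < n" and a: "a \<in> monoms n" and q: "q \<in> pieces n i p" "q' \<in> pieces n i p"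
    and c: "a \<in> cone (fst q) (snd q)" "a \<in> cone (fst q') (snd q')"
  shows "q = q'"
proof (cases "finite (TT n i (fst p) (snd p))")
  case True
  then obtain t t' where "q = ((fst p)(i := t, n := 0), snd p - {n, i})" "q' = ((fst p)(i := t', n := 0), snd p - {n, i})"
    using q by (auto simp: pieces_def)
  then show ?thesis using c piece_cone1[OF i a] by auto
next
  case False
  then show ?thesis using q by (auto simp: pieces_def)
qed

lemma pieces_fin: "finite (pieces n i p)"
  by (auto simp: pieces_def)

lemma pieces_valid:
  assumes i: "i < n" and q: "q \<in> pieces n i p" and m: "fst p \<in> monoms (Suc n)" and Z: "snd p \<subseteq> {..<Suc n}"
  shows "snd q \<subseteq> {..<n} \<and> fst q \<in> monoms n"
  using q i m Z by (auto simp: pieces_def monoms_def split: if_splits)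

lemma pieces_card:
  assumes q: "q \<in> pieces n i p" and f: "finite (snd p)"
  shows "card (snd p) \<le> Suc (card (snd q))"
proof (cases "finite (TT n i (fst p) (snd p))")
  case True
  then obtain t where t: "t \<in> TT n i (fst p) (snd p)" and qe: "snd q = snd p - {n, i}"
    using q by (auto simp: pieces_def)
  have nb: "\<not> (i \<in> snd p \<and> n \<in> snd p)" using TT_both[of i "snd p" n t "fst p"] t True by auto
  have "snd p \<subseteq> (snd p - {n, i}) \<union> ({n, i} \<inter> snd p)" by auto
  then have "card (snd p) \<le> card ((snd p - {n, i}) \<union> ({n, i} \<inter> snd p))"
    by (rule card_mono[rotated]) (use f in auto)
  also have "\<dots> \<le> card (snd p - {n, i}) + card ({n, i} \<inter> snd p)" by (rule card_Un_le)
  also have "card ({n, i} \<inter> snd p) \<le> 1"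
  proof -
    have "{n, i} \<inter> snd p \<subseteq> {n} \<or> {n, i} \<inter> snd p \<subseteq> {i}" using nb by auto
    then show ?thesis by (metis card.empty card.insert card_mono empty_iff finite.emptyI finite_insert One_nat_def)
  qed
  finally show ?thesis using qe by simp
next
  case False
  then have qe: "snd q = insert i (snd p - {n})" using q by (auto simp: pieces_def)
  have "card (snd p) \<le> Suc (card (snd p - {n}))"
  proof (cases "n \<in> snd p")
    case True
    then have "card (snd p - {n}) = card (snd p) - 1" by (rule card_Diff_singleton)
    then show ?thesis by simp
  next
    case False then show ?thesis by simp
  qed
  also have "card (snd p - {n}) \<le> card (insert i (snd p - {n}))" using f by (simp add: card_insert_le)
  finally show ?thesis using qe by simp
qed


lemma dirB:
  assumes I: "monomial_ideal n I" and J: "monomial_ideal n J" and i: "i < n"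
    and sd: "stanley_decomp (Suc n) (polarization1 n i I) (polarization1 n i J) D'" and ne: "I - J \<noteq> {}"
  shows "\<exists>D. stanley_decomp n I J D \<and> sdecomp_depth D' \<le> Suc (sdecomp_depth D)"
proof -
  note md = memdiff[OF I J i]
  have fin: "finite D'" and
    el: "\<And>m Z. (m, Z) \<in> D' \<Longrightarrow> Z \<subseteq> {..<Suc n} \<and> m \<in> monoms (Suc n) \<and>
          cone m Z \<subseteq> polarization1 n i I - polarization1 n i J" and
    un: "\<And>c. c \<in> polarization1 n i I - polarization1 n i J \<Longrightarrow> \<exists>!p. p \<in> D' \<and> c \<in> cone (fst p) (snd p)"
    using sd unfolding sd_iff by auto
  have el2: "snd p \<subseteq> {..<Suc n} \<and> fst p \<in> monoms (Suc n) \<and>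
          cone (fst p) (snd p) \<subseteq> polarization1 n i I - polarization1 n i J" if "p \<in> D'" for p
    using el[of "fst p" "snd p"] that by simp
  define D where "D = (\<Union>p\<in>D'. pieces n i p)"
  have qv: "snd q \<subseteq> {..<n} \<and> fst q \<in> monoms n \<and> cone (fst q) (snd q) \<subseteq> I - J"
    if p: "p \<in> D'" and q: "q \<in> pieces n i p" for p q
  proof -
    have v: "snd q \<subseteq> {..<n} \<and> fst q \<in> monoms n" using pieces_valid[OF i q] el2[OF p] by blast
    moreover have "cone (fst q) (snd q) \<subseteq> I - J"
    proof
      fix a assume a: "a \<in> cone (fst q) (snd q)"
      have am: "a \<in> monoms n" using cone_monoms v a by blast
      have "pol1_mon n i a \<in> cone (fst p) (snd p)" using pieces_cover[OF i am, of p] q a by blast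
      then have "pol1_mon n i a \<in> polarization1 n i I - polarization1 n i J" using el2[OF p] by blast
      then show "a \<in> I - J" using md tau_pol[OF i am] by simp
    qed
    ultimately show ?thesis by blast
  qed
  have sdD: "stanley_decomp n I J D"
    unfolding sd_iff
  proof (intro conjI ballI)
    show "finite D" unfolding D_def using fin pieces_fin by blast
  next
    fix q assume "q \<in> D"
    then obtain p where pp: "p \<in> D'" "q \<in> pieces n i p" unfolding D_def by blast
    show "case q of (m, Z) \<Rightarrow> Z \<subseteq> {..<n} \<and> m \<in> monoms n \<and> cone m Z \<subseteq> I - J"
      using qv[OF pp] by (cases q) simp
  next
    fix a assume a: "a \<in> I - J"
    have am: "a \<in> monoms n" using a mi_sub[OF I] by blast
    have "pol1_mon n i a \<in> polarization1 n i I - polarization1 n i J"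
      using md pol_monoms[OF i am] tau_pol[OF i am] a by simp
    from un[OF this] obtain p where p: "p \<in> D'" "pol1_mon n i a \<in> cone (fst p) (snd p)"
      and pu: "\<And>p'. p' \<in> D' \<Longrightarrow> pol1_mon n i a \<in> cone (fst p') (snd p') \<Longrightarrow> p' = p" by blast
    obtain q where q: "q \<in> pieces n i p" "a \<in> cone (fst q) (snd q)"
      using pieces_cover[OF i am, of p] p by blast
    show "\<exists>!q. q \<in> D \<and> a \<in> cone (fst q) (snd q)"
    proof
      show "q \<in> D \<and> a \<in> cone (fst q) (snd q)" using q p unfolding D_def by blast
    next
      fix q' assume "q' \<in> D \<and> a \<in> cone (fst q') (snd q')"
      then obtain p' where p': "p' \<in> D'" "q' \<in> pieces n i p'" "a \<in> cone (fst q') (snd q')"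
        unfolding D_def by blast
      have "pol1_mon n i a \<in> cone (fst p') (snd p')" using pieces_cover[OF i am, of p'] p' by blast
      then have "p' = p" using pu p' by blast
      then show "q' = q" using pieces_uniq[OF i am q(1) _ q(2)] p' by simp
    qed
  qed
  have Dne: "D \<noteq> {}" using sd_nonempty[OF sdD ne] .
  have finD: "finite D" using sdD unfolding sd_iff by blast
  obtain q where q: "q \<in> D" "sdecomp_depth D = card (snd q)"
    using depth_attained[OF finD Dne] by blast
  then obtain p where p: "p \<in> D'" "q \<in> pieces n i p" unfolding D_def by blast
  have "finite (snd p)" using el2[OF p(1)] finite_subset by blast
  then have "card (snd p) \<le> Suc (card (snd q))" using pieces_card[OF p(2)] by blast
  moreover have "sdecomp_depth D' \<le> card (snd p)" using depth_le[OF fin p(1)] .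
  ultimately show ?thesis using sdD q by auto
qed


lemma nat_incsub: "\<exists>g::nat\<Rightarrow>nat. strict_mono g \<and> (\<forall>t t'. t \<le> t' \<longrightarrow> (s::nat\<Rightarrow>nat) (g t) \<le> s (g t'))"
proof -
  obtain f :: "nat \<Rightarrow> nat" where f: "strict_mono f" "monoseq (\<lambda>n. s (f n))" using seq_monosub[of s] by blast
  show ?thesis
  proof (cases "incseq (\<lambda>n. s (f n))")
    case True
    then have "\<forall>t t'. t \<le> t' \<longrightarrow> s (f t) \<le> s (f t')" by (simp add: incseq_def)
    then show ?thesis using f(1) by blast
  next
    case False
    then have dec: "decseq (\<lambda>n. s (f n))" using f(2) monoseq_iff by blast
    define v where "v = (LEAST x. x \<in> range (\<lambda>n. s (f n)))"
    have "v \<in> range (\<lambda>n. s (f n))" unfolding v_def by (rule LeastI) auto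
    then obtain t0 where t0: "s (f t0) = v" by auto
    have vle: "v \<le> s (f t)" for t unfolding v_def by (rule Least_le) auto
    have const: "s (f (t + t0)) = v" for t
      using dec t0 vle[of "t + t0"] by (auto simp: decseq_def intro: antisym)
    have "strict_mono (\<lambda>t. f (t + t0))" using f(1) by (auto simp: strict_mono_def)
    then show ?thesis using const by (intro exI[of _ "\<lambda>t. f (t + t0)"]) auto
  qed
qed

lemma good_sub: "\<exists>f::nat\<Rightarrow>nat. strict_mono f \<and> (\<forall>j<k. \<forall>t t'. t \<le> t' \<longrightarrow> (s::nat \<Rightarrow> mon) (f t) j \<le> s (f t') j)"
proof (induction k)
  case 0
  have "strict_mono (\<lambda>t::nat. t)" by (simp add: strict_mono_def)
  then show ?case by blast
next
  case (Suc k)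
  then obtain f :: "nat \<Rightarrow> nat" where f: "strict_mono f" "\<forall>j<k. \<forall>t t'. t \<le> t' \<longrightarrow> s (f t) j \<le> s (f t') j" by blast
  obtain g :: "nat \<Rightarrow> nat" where g: "strict_mono g" "\<forall>t t'. t \<le> t' \<longrightarrow> s (f (g t)) k \<le> s (f (g t')) k"
    using nat_incsub[of "\<lambda>t. s (f t) k"] by blast
  have sm: "strict_mono (f \<circ> g)" using f(1) g(1) by (simp add: strict_mono_def)
  have "\<forall>j<Suc k. \<forall>t t'. t \<le> t' \<longrightarrow> s ((f \<circ> g) t) j \<le> s ((f \<circ> g) t') j"
  proof (intro allI impI)
    fix j t t' :: nat assume j: "j < Suc k" and tt: "t \<le> t'"
    show "s ((f \<circ> g) t) j \<le> s ((f \<circ> g) t') j"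
    proof (cases "j = k")
      case True then show ?thesis using g(2) tt by simp
    next
      case False
      then have "j < k" using j by simp
      moreover have "g t \<le> g t'" using g(1) tt by (simp add: strict_mono_less_eq)
      ultimately show ?thesis using f(2) by simp
    qed
  qed
  then show ?case using sm by blast
qed

lemma dickson_pair:
  fixes s :: "nat \<Rightarrow> mon"
  assumes "\<And>t. s t \<in> monoms n"
  shows "\<exists>t t'. t < t' \<and> mdvd (s t) (s t')"
proof -
  obtain f :: "nat \<Rightarrow> nat" where f: "strict_mono f" "\<forall>j<n. \<forall>t t'. t \<le> t' \<longrightarrow> s (f t) j \<le> s (f t') j"
    using good_sub[of n s] by blast
  have "mdvd (s (f 0)) (s (f 1))"
    unfolding mdvd_def
  proof
    fix j show "s (f 0) j \<le> s (f 1) j"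
    proof (cases "j < n")
      case True then show ?thesis using f(2) by simp
    next
      case False then show ?thesis using assms[of "f 0"] by (simp add: monoms_def)
    qed
  qed
  moreover have "f 0 < f 1" using f(1) by (simp add: strict_mono_def)
  ultimately show ?thesis by blast
qed

lemma mingens_finite:
  assumes mi: "monomial_ideal n I"
  shows "finite (mingens I)"
proof (rule ccontr)
  assume "infinite (mingens I)"
  then obtain s :: "nat \<Rightarrow> mon" where s: "inj s" "range s \<subseteq> mingens I"
    using infinite_countable_subset by blast
  have "s t \<in> monoms n" for t using s(2) mi_sub[OF mi] by (auto simp: mingens_def)
  then obtain t t' where tt: "t < t'" "mdvd (s t) (s t')" using dickson_pair by blast
  have "s t \<in> I" "s t' \<in> mingens I" using s(2) by (auto simp: mingens_def)
  then have "s t = s t'" using tt by (auto simp: mingens_def)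
  then show False using s(1) tt(1) by (auto dest: injD)
qed


lemma box_finite: "finite {b. b \<in> monoms n \<and> mdvd b g}"
proof -
  define M where "M = (\<Sum>j<n. g j)"
  define L where "L = {xs. set xs \<subseteq> {..M} \<and> length xs = n}"
  define F where "F = (\<lambda>xs (j::nat). if j < n then xs ! j else (0::nat))"
  have sub: "{b. b \<in> monoms n \<and> mdvd b g} \<subseteq> F ` L"
  proof
    fix b assume b: "b \<in> {b. b \<in> monoms n \<and> mdvd b g}"
    have bm: "b \<in> monoms n" and bg: "mdvd b g" using b by auto
    have le: "b j \<le> M" if "j < n" for j
    proof -
      have "b j \<le> g j" using bg by (simp add: mdvd_def)
      also have "g j \<le> M" unfolding M_def using that by (intro member_le_sum) auto
      finally show ?thesis .
    qed
    have "set (map b [0..<n]) \<subseteq> {..M}" using le by auto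
    then have inL: "map b [0..<n] \<in> L" unfolding L_def by simp
    have "F (map b [0..<n]) = b"
    proof
      fix j show "F (map b [0..<n]) j = b j"
        using bm by (cases "j < n") (simp_all add: F_def monoms_def)
    qed
    then show "b \<in> F ` L" using inL by (metis image_eqI)
  qed
  have "finite L" unfolding L_def by (rule finite_lists_length_eq) simp
  then have "finite (F ` L)" by (rule finite_imageI)
  then show ?thesis using sub by (rule finite_subset[rotated])
qed

lemma exists_sd:
  assumes I: "monomial_ideal n I" and J: "monomial_ideal n J"
  shows "\<exists>D. stanley_decomp n I J D"
proof -
  define G where "G = mingens I \<union> mingens J"
  have fG: "finite G" using mingens_finite[OF I] mingens_finite[OF J] by (simp add: G_def)
  define g where "g = (\<lambda>j. \<Sum>u\<in>G. u j)"
  have ug: "u j \<le> g j" if "u \<in> G" for u j unfolding g_def using fG that by (intro member_le_sum) auto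
  have Gm: "G \<subseteq> monoms n" using mi_sub[OF I] mi_sub[OF J] by (auto simp: G_def mingens_def)
  have gn: "g j = 0" if "n \<le> j" for j unfolding g_def using Gm that by (auto simp: monoms_def intro!: sum.neutral)
  define tr where "tr = (\<lambda>(a::mon) j. min (a j) (g j))"
  have trm: "tr a \<in> monoms n" if "a \<in> monoms n" for a using that by (auto simp: tr_def monoms_def)
  have trg: "mdvd (tr a) g" for a by (simp add: tr_def mdvd_def)
  have trunc: "a \<in> K \<longleftrightarrow> tr a \<in> K" if K: "monomial_ideal n K" "mingens K \<subseteq> G" and a: "a \<in> monoms n" for K a
  proof
    assume "a \<in> K"
    then obtain u where u: "u \<in> mingens K" "mdvd u a" using mingens_below[OF K(1)] by blast
    have "mdvd u (tr a)" using u K(2) ug by (auto simp: mdvd_def tr_def)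
    then show "tr a \<in> K" using mi_up[OF K(1) _ trm[OF a]] u(1) by (auto simp: mingens_def)
  next
    assume "tr a \<in> K"
    moreover have "mdvd (tr a) a" by (simp add: tr_def mdvd_def)
    ultimately show "a \<in> K" using mi_up[OF K(1) _ a] by blast
  qed
  have trI: "a \<in> I - J \<longleftrightarrow> tr a \<in> I - J" if "a \<in> monoms n" for a
    using trunc[OF I _ that] trunc[OF J _ that] by (auto simp: G_def)
  define zb where "zb = (\<lambda>b::mon. {j. j < n \<and> b j = g j})"
  have conetr: "a \<in> cone b (zb b) \<longleftrightarrow> tr a = b" if b: "b \<in> monoms n" "mdvd b g" and a: "a \<in> monoms n" for a b
  proof
    assume c: "a \<in> cone b (zb b)"
    show "tr a = b"
    proof
      fix j
      show "tr a j = b j"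
      proof (cases "j \<in> zb b")
        case True
        have "b j \<le> a j" using c by (simp add: cone_def)
        moreover have "b j = g j" using True by (simp add: zb_def)
        ultimately show ?thesis by (simp add: tr_def)
      next
        case False then show ?thesis using c b by (auto simp: cone_def zb_def tr_def mdvd_def)
      qed
    qed
  next
    assume t: "tr a = b"
    show "a \<in> cone b (zb b)"
      unfolding cone_def
    proof (intro CollectI allI conjI impI)
      fix j
      show "b j \<le> a j" using t by (auto simp: tr_def)
      assume "j \<notin> zb b"
      then show "a j = b j"
        using t a gn[of j] by (cases "j < n") (auto simp: tr_def zb_def monoms_def min_def split: if_splits)
    qed
  qed
  define B where "B = {b. b \<in> monoms n \<and> mdvd b g} \<inter> (I - J)"
  define D where "D = (\<lambda>b. (b, zb b)) ` B"
  have "stanley_decomp n I J D"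
    unfolding sd_iff
  proof (intro conjI ballI)
    show "finite D" unfolding D_def B_def using box_finite by auto
  next
    fix p assume "p \<in> D"
    then obtain b where b: "b \<in> B" "p = (b, zb b)" unfolding D_def by auto
    have "cone b (zb b) \<subseteq> I - J"
    proof
      fix a assume a: "a \<in> cone b (zb b)"
      have zs: "zb b \<subseteq> {..<n}" by (auto simp: zb_def)
      have bm: "b \<in> monoms n" using b by (simp add: B_def)
      have am: "a \<in> monoms n" using a cone_monoms[OF bm zs] by blast
      then have "tr a = b" using conetr a b by (auto simp: B_def)
      then show "a \<in> I - J" using trI[OF am] b by (auto simp: B_def)
    qed
    then show "case p of (m, Z) \<Rightarrow> Z \<subseteq> {..<n} \<and> m \<in> monoms n \<and> cone m Z \<subseteq> I - J"
      using b by (auto simp: zb_def B_def)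
  next
    fix a assume a: "a \<in> I - J"
    have am: "a \<in> monoms n" using a mi_sub[OF I] by blast
    have tB: "tr a \<in> B" using trI[OF am] a trm[OF am] trg by (auto simp: B_def)
    show "\<exists>!p. p \<in> D \<and> a \<in> cone (fst p) (snd p)"
    proof
      show "(tr a, zb (tr a)) \<in> D \<and> a \<in> cone (fst (tr a, zb (tr a))) (snd (tr a, zb (tr a)))"
        using tB conetr[OF _ _ am] by (auto simp: D_def B_def)
    next
      fix p assume "p \<in> D \<and> a \<in> cone (fst p) (snd p)"
      then obtain b where "b \<in> B" "p = (b, zb b)" "a \<in> cone b (zb b)" unfolding D_def by auto
      then show "p = (tr a, zb (tr a))" using conetr[OF _ _ am] by (auto simp: B_def)
    qed
  qed
  then show ?thesis by blast
qed

lemma sdepth_props: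
  assumes ex: "\<exists>D. stanley_decomp n I J D" and ne: "I - J \<noteq> {}"
  shows "(\<exists>D. stanley_decomp n I J D \<and> sdepth n I J = sdecomp_depth D) \<and>
         (\<forall>D. stanley_decomp n I J D \<longrightarrow> sdecomp_depth D \<le> sdepth n I J)"
proof -
  let ?S = "{d. \<exists>D. stanley_decomp n I J D \<and> d = sdecomp_depth D}"
  have bnd: "sdecomp_depth D \<le> n" if sd: "stanley_decomp n I J D" for D
  proof -
    have fD: "finite D" and Dne: "D \<noteq> {}" using sd sd_nonempty[OF sd ne] unfolding sd_iff by auto
    then obtain p where p: "p \<in> D" by auto
    have "case p of (m, Z) \<Rightarrow> Z \<subseteq> {..<n} \<and> m \<in> monoms n \<and> cone m Z \<subseteq> I - J"
      using sd p unfolding sd_iff by blast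
    then have "snd p \<subseteq> {..<n}" by (cases p) simp
    then have "card (snd p) \<le> n" using card_mono[of "{..<n}" "snd p"] by simp
    then show ?thesis using depth_le[OF fD p] by simp
  qed
  have fin: "finite ?S" by (rule finite_subset[of _ "{..n}"]) (use bnd in auto)
  have nes: "?S \<noteq> {}" using ex by auto
  have "sdepth n I J \<in> ?S" unfolding sdepth_def using Max_in[OF fin nes] .
  moreover have "\<forall>D. stanley_decomp n I J D \<longrightarrow> sdecomp_depth D \<le> sdepth n I J"
    unfolding sdepth_def using Max_ge[OF fin] by blast
  ultimately show ?thesis by blast
qed

theorem theorem4p3:
  fixes n i :: nat and I J :: "mon set"
  assumes "monomial_ideal n I" and "monomial_ideal n J" and "J \<subset> I" and "i < n"
  shows "int (sdepth n I J) =
         int (sdepth (Suc n) (polarization1 n i I) (polarization1 n i J)) - 1"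
proof -
  note I = assms(1) and J = assms(2) and i = assms(4)
  have ne: "I - J \<noteq> {}" using assms(3) by blast
  then obtain a where a: "a \<in> I - J" by blast
  have am: "a \<in> monoms n" using a mi_sub[OF I] by blast
  have "pol1_mon n i a \<in> polarization1 n i I - polarization1 n i J"
    using memdiff[OF I J i, of "pol1_mon n i a"] pol_monoms[OF i am] tau_pol[OF i am] a by simp
  then have ne1: "polarization1 n i I - polarization1 n i J \<noteq> {}" by blast
  have ex: "\<exists>D. stanley_decomp n I J D" using exists_sd[OF I J] .
  note P = sdepth_props[OF ex ne]
  then obtain D where D: "stanley_decomp n I J D" "sdepth n I J = sdecomp_depth D" by blast
  have A: "stanley_decomp (Suc n) (polarization1 n i I) (polarization1 n i J) (phi n i ` D)"
     "Suc (sdecomp_depth D) \<le> sdecomp_depth (phi n i ` D)" using dirA[OF I J i D(1) ne] by auto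
  then have ex1: "\<exists>D. stanley_decomp (Suc n) (polarization1 n i I) (polarization1 n i J) D" by blast
  note P1 = sdepth_props[OF ex1 ne1]
  have ge: "Suc (sdepth n I J) \<le> sdepth (Suc n) (polarization1 n i I) (polarization1 n i J)"
  proof -
    have "sdecomp_depth (phi n i ` D) \<le> sdepth (Suc n) (polarization1 n i I) (polarization1 n i J)"
      using P1 A(1) by blast
    then show ?thesis using A(2) D(2) by simp
  qed
  obtain D' where D': "stanley_decomp (Suc n) (polarization1 n i I) (polarization1 n i J) D'"
    "sdepth (Suc n) (polarization1 n i I) (polarization1 n i J) = sdecomp_depth D'" using P1 by blast
  obtain D2 where D2: "stanley_decomp n I J D2" "sdecomp_depth D' \<le> Suc (sdecomp_depth D2)"
    using dirB[OF I J i D'(1) ne] by blast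
  have le: "sdepth (Suc n) (polarization1 n i I) (polarization1 n i J) \<le> Suc (sdepth n I J)"
  proof -
    have "sdecomp_depth D2 \<le> sdepth n I J" using P D2(1) by blast
    then show ?thesis using D'(2) D2(2) by simp
  qed
  show ?thesis using ge le by simp
qed

end
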